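(* Let $\Phi:\mathbb{R}\times(-\epsilon,\epsilon)\to\mathbb{R}^2$ be an orientation-preserving $C^2$ diffeomorphism onto a domain $\Omega\subset\mathbb{R}^2$, and write $\Phi(\sigma;t)=(x(\sigma;t),\,y(\sigma;t))$. For each $t\in(-\epsilon,\epsilon)$ let $\gamma_t$ be the curve $\sigma\mapsto\Phi(\sigma;t)$. Define \[ \varphi=\frac{\det d\Phi}{\|\gamma_t'\|}\quad\text{and}\quad \mathbf{N}=\frac{(-\partial y/\partial\sigma)\,\mathbf{e}_1+(\partial x/\partial\sigma)\,\mathbf{e}_2}{\|\gamma_t'\|}, \] let $s$ be the arc-length parameter (modulo an additive constant) along each integral curve of $\mathbf{N}$, and for $p\in\Omega$ let $\kappa(p)$ be the signed curvature at $p$ of the curve $\gamma_t$ on which $p$ lies, signed in accordance with the normal field $\mathbf{N}$. Then there exists a critical-point-free harmonic function $U$ on $\Omega$ whose family of level curves is $\{\gamma_t\mid t\in(-\epsilon,\epsilon)\}$ if and only if $\frac{\partial\varphi}{\partial s}+\kappa\varphi$ is constant on each curve $\gamma_t$, i.e. \[ \frac{\partial}{\partial\sigma}\left(\frac{\partial\varphi}{\partial s}+\kappa\varphi\right)\equiv 0 . \]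
   Context: Here $\det d\Phi$ is the Jacobian determinant of $\Phi$ at $(\sigma;t)$ and $\|\gamma_t'\|=\|\partial\Phi/\partial\sigma\|$, so $\varphi$ and $\mathbf{N}$ are functions on $\mathbb{R}\times(-\epsilon,\epsilon)$, transported to $\Omega$ via $\Phi$ when needed. Signed curvature: with unit tangent $\mathbf{T}$ of $\gamma_t$ chosen so that $(\mathbf{T},\mathbf{N})$ is a positively oriented frame, $\kappa$ is defined by $d\mathbf{T}/d\ell=\kappa\mathbf{N}$, where $\ell$ is arc length along $\gamma_t$. The quantity $\frac{\partial\varphi}{\partial s}+\kappa\varphi$ is regarded as a function on $\mathbb{R}\times(-\epsilon,\epsilon)$: for $q$ there, $(\kappa\varphi)(q)=\kappa(\Phi(q))\varphi(q)$, and if $\alpha:(-\delta,\delta)\to\Omega$ is the unit-speed integral curve of $\mathbf{N}$ with $\alpha(0)=\Phi(q)$, then $\frac{\partial\varphi}{\partial s}(q)=\frac{d}{ds}\big|_{s=0}\varphi(\Phi^{-1}(\alpha(s)))$. "Level-curve family $\{\gamma_t\}$" means the level sets of $U$ in $\Omega$ are exactly the curves $\gamma_t$. *)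

theory Defs
  imports "HOL-Analysis.Analysis"
begin

definition C1_on :: "'a::real_normed_vector set \<Rightarrow> ('a \<Rightarrow> 'b::real_normed_vector) \<Rightarrow> bool" where
  "C1_on S f \<longleftrightarrow> (\<exists>f'. (\<forall>p\<in>S. (f has_derivative blinfun_apply (f' p)) (at p)) \<and> continuous_on S f')"

definition C2_on :: "'a::real_normed_vector set \<Rightarrow> ('a \<Rightarrow> 'b::real_normed_vector) \<Rightarrow> bool" where
  "C2_on S f \<longleftrightarrow> (\<exists>f'. (\<forall>p\<in>S. (f has_derivative blinfun_apply (f' p)) (at p)) \<and> C1_on S f')"

definition partial1 :: "(real \<times> real \<Rightarrow> 'b::real_normed_vector) \<Rightarrow> real \<times> real \<Rightarrow> 'b" where
  "partial1 f p = vector_derivative (\<lambda>a. f (a, snd p)) (at (fst p))"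

definition partial2 :: "(real \<times> real \<Rightarrow> 'b::real_normed_vector) \<Rightarrow> real \<times> real \<Rightarrow> 'b" where
  "partial2 f p = vector_derivative (\<lambda>b. f (fst p, b)) (at (snd p))"

definition jac :: "(real \<times> real \<Rightarrow> real \<times> real) \<Rightarrow> real \<times> real \<Rightarrow> real" where
  "jac \<Phi> q = fst (partial1 \<Phi> q) * snd (partial2 \<Phi> q) - fst (partial2 \<Phi> q) * snd (partial1 \<Phi> q)"

definition phi :: "(real \<times> real \<Rightarrow> real \<times> real) \<Rightarrow> real \<times> real \<Rightarrow> real" where
  "phi \<Phi> q = jac \<Phi> q / norm (partial1 \<Phi> q)"

definition tangent :: "(real \<times> real \<Rightarrow> real \<times> real) \<Rightarrow> real \<times> real \<Rightarrow> real \<times> real" where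
  "tangent \<Phi> q = inverse (norm (partial1 \<Phi> q)) *\<^sub>R partial1 \<Phi> q"

definition normal :: "(real \<times> real \<Rightarrow> real \<times> real) \<Rightarrow> real \<times> real \<Rightarrow> real \<times> real" where
  "normal \<Phi> q = inverse (norm (partial1 \<Phi> q)) *\<^sub>R (- snd (partial1 \<Phi> q), fst (partial1 \<Phi> q))"

text \<open>Signed curvature of \<open>\<gamma>_t\<close> at \<open>\<Phi>(q)\<close>: \<open>dT/d\<ell> = \<kappa> N\<close> with \<open>d\<ell> = \<parallel>\<gamma>_t'\<parallel> d\<sigma>\<close>;
  since \<open>N\<close> is a unit vector this is \<open>\<kappa> = (dT/d\<sigma> \<bullet> N)/\<parallel>\<gamma>_t'\<parallel>\<close>.  Regarded as a function
  on the parameter domain, i.e. \<open>kappa \<Phi> q = \<kappa>(\<Phi> q)\<close>.\<close>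
definition kappa :: "(real \<times> real \<Rightarrow> real \<times> real) \<Rightarrow> real \<times> real \<Rightarrow> real" where
  "kappa \<Phi> q = (partial1 (tangent \<Phi>) q \<bullet> normal \<Phi> q) / norm (partial1 \<Phi> q)"

text \<open>Derivative of \<open>\<phi>\<close> with respect to arc length \<open>s\<close> along the integral curves of \<open>N\<close>:
  the derivative of \<open>\<phi> \<circ> \<Phi>\<^sup>-\<^sup>1\<close> at \<open>\<Phi>(q)\<close> in the (unit) direction \<open>N(q)\<close>.\<close>
definition dphi_ds :: "(real \<times> real) set \<Rightarrow> (real \<times> real \<Rightarrow> real \<times> real) \<Rightarrow> real \<times> real \<Rightarrow> real" where
  "dphi_ds D \<Phi> q = frechet_derivative (phi \<Phi> \<circ> inv_into D \<Phi>) (at (\<Phi> q)) (normal \<Phi> q)"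

definition harmonic_on :: "(real \<times> real) set \<Rightarrow> (real \<times> real \<Rightarrow> real) \<Rightarrow> bool" where
  "harmonic_on S U \<longleftrightarrow> C2_on S U \<and>
     (\<forall>p\<in>S. partial1 (partial1 U) p + partial2 (partial2 U) p = 0)"

definition critical_point_free_on :: "(real \<times> real) set \<Rightarrow> (real \<times> real \<Rightarrow> real) \<Rightarrow> bool" where
  "critical_point_free_on S U \<longleftrightarrow> (\<forall>p\<in>S. (partial1 U p, partial2 U p) \<noteq> (0, 0))"

end

theory Submission
  imports Defs "HOL-Analysis.Analysis"
begin

lemma lin2:
  assumes "linear f"
  shows "f h = fst h *\<^sub>R f (1,0) + snd h *\<^sub>R f (0,1)"
proof -
  have "h = fst h *\<^sub>R (1,0) + snd h *\<^sub>R (0::real,1::real)" by (cases h) simp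
  then have "f h = f (fst h *\<^sub>R (1,0) + snd h *\<^sub>R (0::real,1::real))" by simp
  also have "\<dots> = fst h *\<^sub>R f (1,0) + snd h *\<^sub>R f (0,1)"
    by (simp only: linear_add[OF assms] linear_scale[OF assms])
  finally show ?thesis .
qed

lemma partials_of_deriv:
  assumes "(f has_derivative f') (at p)"
  shows "partial1 f p = f' (1,0)" "partial2 f p = f' (0,1)"
proof -
  have lin: "linear f'" using assms has_derivative_linear by blast
  have i1: "((\<lambda>a::real. (a, snd p)) has_derivative (\<lambda>h. (h, 0))) (at (fst p))"
    by (auto intro!: derivative_eq_intros)
  have a1: "(f has_derivative f') (at (fst p, snd p))" using assms by simp
  have "((\<lambda>a. f (a, snd p)) has_derivative (\<lambda>h. f' (h,0))) (at (fst p))"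
    using has_derivative_compose[OF i1 a1] .
  moreover have "(\<lambda>h. f' (h,0)) = (\<lambda>h. h *\<^sub>R f' (1,0))"
    by (rule ext, subst lin2[OF lin], simp)
  ultimately have "((\<lambda>a. f (a, snd p)) has_vector_derivative f' (1,0)) (at (fst p))"
    by (simp add: has_vector_derivative_def)
  then show "partial1 f p = f' (1,0)" unfolding partial1_def by (rule vector_derivative_at)
  have i2: "((\<lambda>b::real. (fst p, b)) has_derivative (\<lambda>h. (0, h))) (at (snd p))"
    by (auto intro!: derivative_eq_intros)
  have "((\<lambda>b. f (fst p, b)) has_derivative (\<lambda>h. f' (0,h))) (at (snd p))"
    using has_derivative_compose[OF i2 a1] .
  moreover have "(\<lambda>h. f' (0,h)) = (\<lambda>h. h *\<^sub>R f' (0,1))"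
    by (rule ext, subst lin2[OF lin], simp)
  ultimately have "((\<lambda>b. f (fst p, b)) has_vector_derivative f' (0,1)) (at (snd p))"
    by (simp add: has_vector_derivative_def)
  then show "partial2 f p = f' (0,1)" unfolding partial2_def by (rule vector_derivative_at)
qed

lemma partials_transform:
  assumes "(f has_derivative f') (at p)" "open S" "p \<in> S" "\<And>x. x \<in> S \<Longrightarrow> g x = f x"
  shows "partial1 g p = f' (1,0)" "partial2 g p = f' (0,1)"
proof -
  have "(g has_derivative f') (at p)"
    using has_derivative_transform_within_open[OF assms(1-3)] assms(4) by metis
  then show "partial1 g p = f' (1,0)" "partial2 g p = f' (0,1)" by (rule partials_of_deriv)+
qed

lemma aux_half: "inverse (S::real) / 2 * (2 * E) = E / S"
  by (cases "S = 0") (simp_all add: field_simps)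

locale lvl =
  fixes Phi :: "real \<times> real \<Rightarrow> real \<times> real" and eps :: real and Om :: "(real \<times> real) set"
    and D :: "(real \<times> real) set"
    and Phi1 :: "real \<times> real \<Rightarrow> (real \<times> real) \<Rightarrow>\<^sub>L (real \<times> real)"
    and Phi2 :: "real \<times> real \<Rightarrow> (real \<times> real) \<Rightarrow>\<^sub>L ((real \<times> real) \<Rightarrow>\<^sub>L (real \<times> real))"
    and Psi1 :: "real \<times> real \<Rightarrow> (real \<times> real) \<Rightarrow>\<^sub>L (real \<times> real)"
    and Psi2 :: "real \<times> real \<Rightarrow> (real \<times> real) \<Rightarrow>\<^sub>L ((real \<times> real) \<Rightarrow>\<^sub>L (real \<times> real))"
  assumes D_eq: "D = (UNIV :: real set) \<times> {-eps<..<eps}"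
    and eps: "eps > 0"
    and dPhi: "\<And>q. q \<in> D \<Longrightarrow> (Phi has_derivative blinfun_apply (Phi1 q)) (at q)"
    and dPhi1: "\<And>q. q \<in> D \<Longrightarrow> (Phi1 has_derivative blinfun_apply (Phi2 q)) (at q)"
    and contPhi2: "continuous_on D Phi2"
    and inj: "inj_on Phi D"
    and onto: "Phi ` D = Om"
    and dPsi: "\<And>p. p \<in> Om \<Longrightarrow> (inv_into D Phi has_derivative blinfun_apply (Psi1 p)) (at p)"
    and dPsi1: "\<And>p. p \<in> Om \<Longrightarrow> (Psi1 has_derivative blinfun_apply (Psi2 p)) (at p)"
    and contPsi2: "continuous_on Om Psi2"
    and orient: "\<And>q. q \<in> D \<Longrightarrow> jac Phi q > 0"
begin

abbreviation "Psi \<equiv> inv_into D Phi"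

definition "aa q = fst (blinfun_apply (Phi1 q) (1,0))"
definition "bb q = snd (blinfun_apply (Phi1 q) (1,0))"
definition "cc q = fst (blinfun_apply (Phi1 q) (0,1))"
definition "dd q = snd (blinfun_apply (Phi1 q) (0,1))"
definition "da1 q = fst (blinfun_apply (blinfun_apply (Phi2 q) (1,0)) (1,0))"
definition "da2 q = fst (blinfun_apply (blinfun_apply (Phi2 q) (0,1)) (1,0))"
definition "db1 q = snd (blinfun_apply (blinfun_apply (Phi2 q) (1,0)) (1,0))"
definition "db2 q = snd (blinfun_apply (blinfun_apply (Phi2 q) (0,1)) (1,0))"
definition "dc1 q = fst (blinfun_apply (blinfun_apply (Phi2 q) (1,0)) (0,1))"
definition "dc2 q = fst (blinfun_apply (blinfun_apply (Phi2 q) (0,1)) (0,1))"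
definition "dd1 q = snd (blinfun_apply (blinfun_apply (Phi2 q) (1,0)) (0,1))"
definition "dd2 q = snd (blinfun_apply (blinfun_apply (Phi2 q) (0,1)) (0,1))"
definition "JJ q = aa q * dd q - cc q * bb q"
definition "LL q = sqrt (aa q ^ 2 + bb q ^ 2)"
definition "DJ1 q = da1 q * dd q + aa q * dd1 q - dc1 q * bb q - cc q * db1 q"
definition "DJ2 q = da2 q * dd q + aa q * dd2 q - dc2 q * bb q - cc q * db2 q"

lemma openD: "open D"
  unfolding D_eq by (intro open_Times) auto

lemma contPhi: "continuous_on D Phi"
  by (rule continuous_at_imp_continuous_on) (use dPhi has_derivative_continuous in blast)

lemma openOm: "open Om"
  using invariance_of_domain[OF contPhi openD inj] onto by simp

lemma Psi_Phi: "q \<in> D \<Longrightarrow> Psi (Phi q) = q"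
  using inj by simp

lemma Psi_in: "p \<in> Om \<Longrightarrow> Psi p \<in> D"
  using onto by (auto intro: inv_into_into)

lemma Phi_Psi: "p \<in> Om \<Longrightarrow> Phi (Psi p) = p"
  using onto by (auto intro: f_inv_into_f)

lemma Phi_in: "q \<in> D \<Longrightarrow> Phi q \<in> Om"
  using onto by auto

lemma part_Phi: "q \<in> D \<Longrightarrow> partial1 Phi q = (aa q, bb q)" "q \<in> D \<Longrightarrow> partial2 Phi q = (cc q, dd q)"
  using partials_of_deriv[OF dPhi] by (auto simp: aa_def bb_def cc_def dd_def)

lemma jac_eq: "q \<in> D \<Longrightarrow> jac Phi q = JJ q"
  by (simp add: jac_def part_Phi JJ_def)

lemma JJ_pos: "q \<in> D \<Longrightarrow> JJ q > 0"
  using orient jac_eq by fastforce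

lemma ab_nz: "q \<in> D \<Longrightarrow> aa q ^ 2 + bb q ^ 2 > 0"
proof -
  assume q: "q \<in> D"
  have "aa q \<noteq> 0 \<or> bb q \<noteq> 0"
    using JJ_pos[OF q] unfolding JJ_def by auto
  then show ?thesis by (auto simp: add_pos_nonneg add_nonneg_pos)
qed

lemma LL_pos: "q \<in> D \<Longrightarrow> LL q > 0"
  using ab_nz by (simp add: LL_def)

lemma LL_sq: "q \<in> D \<Longrightarrow> LL q ^ 2 = aa q ^ 2 + bb q ^ 2"
  using ab_nz by (simp add: LL_def)

lemma norm_part1: "q \<in> D \<Longrightarrow> norm (partial1 Phi q) = LL q"
  by (simp add: part_Phi LL_def norm_Pair)

lemma phi_eq: "q \<in> D \<Longrightarrow> phi Phi q = JJ q / LL q"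
  by (simp add: phi_def jac_eq norm_part1)

lemma normal_eq: "q \<in> D \<Longrightarrow> normal Phi q = (- bb q / LL q, aa q / LL q)"
proof -
  assume q: "q \<in> D"
  have "norm (aa q, bb q) = LL q" using norm_part1[OF q] part_Phi[OF q] by simp
  then show ?thesis using q by (simp add: normal_def part_Phi divide_inverse mult.commute)
qed

lemma blin2: "blinfun_apply (B::(real\<times>real) \<Rightarrow>\<^sub>L 'b::real_normed_vector) h = fst h *\<^sub>R B (1,0) + snd h *\<^sub>R B (0,1)"
  by (rule lin2) (rule bounded_linear.linear[OF blinfun.bounded_linear_right])

lemma hd_eq: "(f has_derivative f') F \<Longrightarrow> (\<And>h. f' h = g' h) \<Longrightarrow> (f has_derivative g') F"
  by (metis ext)

lemma dPhi1_col1: "q \<in> D \<Longrightarrow> ((\<lambda>q. blinfun_apply (Phi1 q) (1,0)) has_derivative (\<lambda>h. blinfun_apply (Phi2 q h) (1,0))) (at q)"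
  by (auto intro!: derivative_eq_intros dPhi1)

lemma dPhi1_col2: "q \<in> D \<Longrightarrow> ((\<lambda>q. blinfun_apply (Phi1 q) (0,1)) has_derivative (\<lambda>h. blinfun_apply (Phi2 q h) (0,1))) (at q)"
  by (auto intro!: derivative_eq_intros dPhi1)

lemma d_aa: "q \<in> D \<Longrightarrow> (aa has_derivative (\<lambda>h. fst h * da1 q + snd h * da2 q)) (at q)"
  unfolding aa_def[abs_def]
  by (rule hd_eq[OF has_derivative_fst[OF dPhi1_col1]], assumption,
      subst blin2[of "Phi2 q"], simp add: da1_def da2_def blinfun.add_left blinfun.scaleR_left)

lemma d_bb: "q \<in> D \<Longrightarrow> (bb has_derivative (\<lambda>h. fst h * db1 q + snd h * db2 q)) (at q)"
  unfolding bb_def[abs_def]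
  by (rule hd_eq[OF has_derivative_snd[OF dPhi1_col1]], assumption,
      subst blin2[of "Phi2 q"], simp add: db1_def db2_def blinfun.add_left blinfun.scaleR_left)

lemma d_cc: "q \<in> D \<Longrightarrow> (cc has_derivative (\<lambda>h. fst h * dc1 q + snd h * dc2 q)) (at q)"
  unfolding cc_def[abs_def]
  by (rule hd_eq[OF has_derivative_fst[OF dPhi1_col2]], assumption,
      subst blin2[of "Phi2 q"], simp add: dc1_def dc2_def blinfun.add_left blinfun.scaleR_left)

lemma d_dd: "q \<in> D \<Longrightarrow> (dd has_derivative (\<lambda>h. fst h * dd1 q + snd h * dd2 q)) (at q)"
  unfolding dd_def[abs_def]
  by (rule hd_eq[OF has_derivative_snd[OF dPhi1_col2]], assumption,
      subst blin2[of "Phi2 q"], simp add: dd1_def dd2_def blinfun.add_left blinfun.scaleR_left)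

lemma d_JJ: "q \<in> D \<Longrightarrow> (JJ has_derivative (\<lambda>h. fst h * DJ1 q + snd h * DJ2 q)) (at q)"
  unfolding JJ_def[abs_def]
  apply (rule hd_eq)
   apply (rule derivative_eq_intros d_aa d_bb d_cc d_dd refl | assumption)+
  apply (simp add: DJ1_def DJ2_def algebra_simps)
  done

lemma d_sq: "q \<in> D \<Longrightarrow> ((\<lambda>q. aa q ^ 2 + bb q ^ 2) has_derivative (\<lambda>h. 2 * (aa q * (fst h * da1 q + snd h * da2 q) + bb q * (fst h * db1 q + snd h * db2 q)))) (at q)"
  apply (rule hd_eq)
   apply (rule has_derivative_add)
    apply (rule has_derivative_power[OF d_aa], assumption)
   apply (rule has_derivative_power[OF d_bb], assumption)
  apply (simp add: algebra_simps)
  done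

lemma d_LL: "q \<in> D \<Longrightarrow> (LL has_derivative (\<lambda>h. (aa q * (fst h * da1 q + snd h * da2 q) + bb q * (fst h * db1 q + snd h * db2 q)) / LL q)) (at q)"
proof -
  assume q: "q \<in> D"
  have s: "(sqrt has_real_derivative inverse (sqrt (aa q ^ 2 + bb q ^ 2)) / 2) (at (aa q ^ 2 + bb q ^ 2))"
    using ab_nz[OF q] by (intro DERIV_real_sqrt) simp
  show ?thesis
    unfolding LL_def[abs_def]
    apply (rule hd_eq)
     apply (rule has_derivative_compose[of "\<lambda>q. aa q ^ 2 + bb q ^ 2", OF d_sq[OF q] s[unfolded has_field_derivative_def]])
    by (rule aux_half)
qed

end

lemma cramer_alg:
  fixes a b c d x y J :: real
  assumes "J \<noteq> 0" "J = a*d - c*b"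
  shows "(x*d - y*c)/J*a + (a*y - b*x)/J*c = x" "(x*d - y*c)/J*b + (a*y - b*x)/J*d = y"
proof -
  have "(x*d - y*c)/J*a + (a*y - b*x)/J*c = (x*(a*d - c*b))/J"
    using assms(1) by (simp add: field_simps)
  then show "(x*d - y*c)/J*a + (a*y - b*x)/J*c = x" using assms by simp
  have "(x*d - y*c)/J*b + (a*y - b*x)/J*d = (y*(a*d - c*b))/J"
    using assms(1) by (simp add: field_simps)
  then show "(x*d - y*c)/J*b + (a*y - b*x)/J*d = y" using assms by simp
qed

context lvl begin

definition "DLh q h = (aa q * (fst h * da1 q + snd h * da2 q) + bb q * (fst h * db1 q + snd h * db2 q)) / LL q"

lemma d_LL': "q \<in> D \<Longrightarrow> (LL has_derivative DLh q) (at q)"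
  using d_LL unfolding DLh_def[abs_def] by simp

lemma tangent_eq: "q \<in> D \<Longrightarrow> tangent Phi q = (aa q / LL q, bb q / LL q)"
proof -
  assume q: "q \<in> D"
  have "norm (aa q, bb q) = LL q" using norm_part1[OF q] part_Phi[OF q] by simp
  then show ?thesis using q by (simp add: tangent_def part_Phi divide_inverse mult.commute)
qed

lemma kappa_eq: "q \<in> D \<Longrightarrow> kappa Phi q = (aa q * db1 q - bb q * da1 q) / LL q ^ 3"
proof -
  assume q: "q \<in> D"
  have L0: "LL q \<noteq> 0" using LL_pos[OF q] by simp
  have dT: "((\<lambda>x. (aa x / LL x, bb x / LL x)) has_derivative
     (\<lambda>h. ((fst h * da1 q + snd h * da2 q) / LL q - aa q * DLh q h / LL q ^ 2,
           (fst h * db1 q + snd h * db2 q) / LL q - bb q * DLh q h / LL q ^ 2))) (at q)"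
    apply (rule hd_eq)
     apply (rule has_derivative_Pair)
      apply (rule has_derivative_divide[OF d_aa[OF q] d_LL'[OF q] L0])
     apply (rule has_derivative_divide[OF d_bb[OF q] d_LL'[OF q] L0])
    using L0 by (simp add: field_simps power2_eq_square)
  have p1: "partial1 (tangent Phi) q = ((da1 q) / LL q - aa q * DLh q (1,0) / LL q ^ 2,
           (db1 q) / LL q - bb q * DLh q (1,0) / LL q ^ 2)"
    using partials_transform(1)[OF dT openD q, of "tangent Phi"] tangent_eq by simp
  show ?thesis
    unfolding kappa_def p1 normal_eq[OF q] norm_part1[OF q]
    using L0 by (simp add: field_simps power2_eq_square power3_eq_cube DLh_def)
qed

lemma Phi1_apply: "blinfun_apply (Phi1 q) h = (fst h * aa q + snd h * cc q, fst h * bb q + snd h * dd q)"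
  by (subst blin2) (simp add: aa_def bb_def cc_def dd_def prod_eq_iff)

lemma Psi1_inv: "q \<in> D \<Longrightarrow> blinfun_apply (Psi1 (Phi q)) (blinfun_apply (Phi1 q) h) = h"
proof -
  assume q: "q \<in> D"
  have c: "((\<lambda>x. Psi (Phi x)) has_derivative (\<lambda>h. Psi1 (Phi q) (Phi1 q h))) (at q)"
    using has_derivative_compose[OF dPhi[OF q] dPsi[OF Phi_in[OF q]]] .
  have i: "((\<lambda>x. Psi (Phi x)) has_derivative (\<lambda>h. h)) (at q)"
    by (rule has_derivative_transform_within_open[OF has_derivative_ident openD q]) (simp add: Psi_Phi)
  show ?thesis using has_derivative_unique[OF c i] by metis
qed

definition "cramer q v = ((fst v * dd q - snd v * cc q) / JJ q, (aa q * snd v - bb q * fst v) / JJ q)"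

lemma Psi1_eq: "q \<in> D \<Longrightarrow> blinfun_apply (Psi1 (Phi q)) v = cramer q v"
proof -
  assume q: "q \<in> D"
  have J0: "JJ q \<noteq> 0" using JJ_pos[OF q] by simp
  have "blinfun_apply (Phi1 q) (cramer q v) = v"
  proof -
    obtain x y where v: "v = (x,y)" by (cases v)
    note cramer_alg[OF J0 JJ_def, of x y]
    then show ?thesis unfolding Phi1_apply cramer_def v by simp
  qed
  then show ?thesis using Psi1_inv[OF q, of "cramer q v"] by simp
qed

definition "DPH q h = ((fst h * DJ1 q + snd h * DJ2 q) * LL q - JJ q * DLh q h) / LL q ^ 2"

lemma d_PH: "q \<in> D \<Longrightarrow> ((\<lambda>x. JJ x / LL x) has_derivative DPH q) (at q)"
proof -
  assume q: "q \<in> D"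
  have L0: "LL q \<noteq> 0" using LL_pos[OF q] by simp
  show ?thesis
    apply (rule hd_eq)
     apply (rule has_derivative_divide[OF d_JJ[OF q] d_LL'[OF q] L0])
    using L0 by (simp add: DPH_def field_simps power2_eq_square)
qed

lemma dphi_ds_eq: "q \<in> D \<Longrightarrow> dphi_ds D Phi q = DPH q (cramer q (- bb q / LL q, aa q / LL q))"
proof -
  assume q: "q \<in> D"
  have c: "((\<lambda>x. JJ (Psi x) / LL (Psi x)) has_derivative (\<lambda>v. DPH q (Psi1 (Phi q) v))) (at (Phi q))"
    using has_derivative_compose[OF dPsi[OF Phi_in[OF q]], of "\<lambda>x. JJ x / LL x"] d_PH[OF q] Psi_Phi[OF q]
    by simp
  have c2: "((phi Phi \<circ> Psi) has_derivative (\<lambda>v. DPH q (Psi1 (Phi q) v))) (at (Phi q))"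
    by (rule has_derivative_transform_within_open[OF c openOm Phi_in[OF q]])
       (simp add: phi_eq Psi_in)
  show ?thesis
    unfolding dphi_ds_def frechet_derivative_at[OF c2, symmetric] normal_eq[OF q] Psi1_eq[OF q] ..
qed

definition "KK q = DPH q (cramer q (- bb q / LL q, aa q / LL q)) + (aa q * db1 q - bb q * da1 q) / LL q ^ 3 * (JJ q / LL q)"

lemma K_eq: "q \<in> D \<Longrightarrow> dphi_ds D Phi q + kappa Phi q * phi Phi q = KK q"
  by (simp add: dphi_ds_eq kappa_eq phi_eq KK_def)

end

context lvl begin

definition "DB q h = (-(fst h * db1 q + snd h * db2 q) * JJ q + bb q * (fst h * DJ1 q + snd h * DJ2 q)) / JJ q ^ 2"
definition "DA q h = ((fst h * da1 q + snd h * da2 q) * JJ q - aa q * (fst h * DJ1 q + snd h * DJ2 q)) / JJ q ^ 2"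

lemma d_mbJ: "q \<in> D \<Longrightarrow> ((\<lambda>x. - bb x / JJ x) has_derivative DB q) (at q)"
proof -
  assume q: "q \<in> D"
  have J0: "JJ q \<noteq> 0" using JJ_pos[OF q] by simp
  show ?thesis
    apply (rule hd_eq)
     apply (rule has_derivative_divide[OF has_derivative_minus[OF d_bb[OF q]] d_JJ[OF q] J0])
    using J0 by (simp add: DB_def field_simps power2_eq_square)
qed

lemma d_aJ: "q \<in> D \<Longrightarrow> ((\<lambda>x. aa x / JJ x) has_derivative DA q) (at q)"
proof -
  assume q: "q \<in> D"
  have J0: "JJ q \<noteq> 0" using JJ_pos[OF q] by simp
  show ?thesis
    apply (rule hd_eq)
     apply (rule has_derivative_divide[OF d_aa[OF q] d_JJ[OF q] J0])
    using J0 by (simp add: DA_def field_simps power2_eq_square)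
qed

lemma key: "q \<in> D \<Longrightarrow> DB q (cramer q (1,0)) + DA q (cramer q (0,1)) = -(LL q ^ 2 / JJ q ^ 2) * KK q"
proof -
  assume q: "q \<in> D"
  have J0: "JJ q * inverse (JJ q) = 1" using JJ_pos[OF q] by simp
  have L0: "LL q * inverse (LL q) = 1" using LL_pos[OF q] by simp
  note LL_sq[OF q] JJ_def[of q]
  show ?thesis
    unfolding DB_def DA_def cramer_def KK_def DPH_def DLh_def
    apply (simp only: fst_conv snd_conv divide_inverse power_inverse[symmetric])
    using J0 L0 LL_sq[OF q] JJ_def[of q]
    apply algebra
    done
qed

lemma tau_in: "p \<in> Om \<Longrightarrow> snd (Psi p) \<in> {-eps<..<eps}"
  using Psi_in[of p] D_eq by (auto simp: mem_Times_iff)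

lemma snd_in: "q \<in> D \<Longrightarrow> snd q \<in> {-eps<..<eps}"
  using D_eq by (auto simp: mem_Times_iff)

lemma lap:
  fixes f f1 f2 :: "real \<Rightarrow> real" and U :: "real \<times> real \<Rightarrow> real"
  assumes df: "\<And>t. t \<in> {-eps<..<eps} \<Longrightarrow> (f has_real_derivative f1 t) (at t)"
    and df1: "\<And>t. t \<in> {-eps<..<eps} \<Longrightarrow> (f1 has_real_derivative f2 t) (at t)"
    and U: "\<And>p. p \<in> Om \<Longrightarrow> U p = f (snd (Psi p))"
    and q: "q \<in> D"
  shows "partial1 U (Phi q) = f1 (snd q) * (- bb q / JJ q)"
    "partial2 U (Phi q) = f1 (snd q) * (aa q / JJ q)"
    "partial1 (partial1 U) (Phi q) + partial2 (partial2 U) (Phi q)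
       = (LL q ^ 2 / JJ q ^ 2) * (f2 (snd q) - f1 (snd q) * KK q)"
proof -
  have dU: "(U has_derivative (\<lambda>h. f1 (snd (Psi p)) * snd (Psi1 p h))) (at p)" if p: "p \<in> Om" for p
  proof -
    have "((\<lambda>x. f (snd (Psi x))) has_derivative (\<lambda>h. f1 (snd (Psi p)) * snd (Psi1 p h))) (at p)"
      using has_derivative_compose[OF has_derivative_snd[OF dPsi[OF p]] df[OF tau_in[OF p], unfolded has_field_derivative_def]] .
    then show ?thesis
      by (rule has_derivative_transform_within_open[OF _ openOm p]) (simp add: U)
  qed
  have cr: "blinfun_apply (Psi1 p) v = cramer (Psi p) v" if p: "p \<in> Om" for p v
    using Psi1_eq[OF Psi_in[OF p], of v] Phi_Psi[OF p] by simp
  have P1: "partial1 U p = f1 (snd (Psi p)) * (- bb (Psi p) / JJ (Psi p))" if p: "p \<in> Om" for p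
    using partials_of_deriv(1)[OF dU[OF p]] cr[OF p] by (simp add: cramer_def)
  have P2: "partial2 U p = f1 (snd (Psi p)) * (aa (Psi p) / JJ (Psi p))" if p: "p \<in> Om" for p
    using partials_of_deriv(2)[OF dU[OF p]] cr[OF p] by (simp add: cramer_def)
  define p0 where "p0 = Phi q"
  have p0: "p0 \<in> Om" using Phi_in[OF q] p0_def by simp
  have Pq: "Psi p0 = q" using Psi_Phi[OF q] p0_def by simp
  show "partial1 U (Phi q) = f1 (snd q) * (- bb q / JJ q)"
    using P1[OF p0] Pq p0_def by simp
  show "partial2 U (Phi q) = f1 (snd q) * (aa q / JJ q)"
    using P2[OF p0] Pq p0_def by simp
  have A: "((\<lambda>p. f1 (snd (Psi p))) has_derivative (\<lambda>h. f2 (snd q) * snd (Psi1 p0 h))) (at p0)"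
    using has_derivative_compose[OF has_derivative_snd[OF dPsi[OF p0]] df1[OF tau_in[OF p0], unfolded has_field_derivative_def]] Pq
    by simp
  have B1: "((\<lambda>p. - bb (Psi p) / JJ (Psi p)) has_derivative (\<lambda>h. DB q (Psi1 p0 h))) (at p0)"
    using has_derivative_compose[OF dPsi[OF p0], of "\<lambda>x. - bb x / JJ x"] d_mbJ[OF q] Pq by simp
  have B2: "((\<lambda>p. aa (Psi p) / JJ (Psi p)) has_derivative (\<lambda>h. DA q (Psi1 p0 h))) (at p0)"
    using has_derivative_compose[OF dPsi[OF p0], of "\<lambda>x. aa x / JJ x"] d_aJ[OF q] Pq by simp
  have G1: "((\<lambda>p. f1 (snd (Psi p)) * (- bb (Psi p) / JJ (Psi p))) has_derivative
     (\<lambda>h. f1 (snd q) * DB q (Psi1 p0 h) + f2 (snd q) * snd (Psi1 p0 h) * (- bb q / JJ q))) (at p0)"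
    using has_derivative_mult[OF A B1] Pq by simp
  have G2: "((\<lambda>p. f1 (snd (Psi p)) * (aa (Psi p) / JJ (Psi p))) has_derivative
     (\<lambda>h. f1 (snd q) * DA q (Psi1 p0 h) + f2 (snd q) * snd (Psi1 p0 h) * (aa q / JJ q))) (at p0)"
    using has_derivative_mult[OF A B2] Pq by simp
  have Q1: "partial1 (partial1 U) p0 = f1 (snd q) * DB q (cramer q (1,0)) + f2 (snd q) * snd (cramer q (1,0)) * (- bb q / JJ q)"
    using partials_transform(1)[OF G1 openOm p0, of "partial1 U"] P1 cr[OF p0] Pq by simp
  have Q2: "partial2 (partial2 U) p0 = f1 (snd q) * DA q (cramer q (0,1)) + f2 (snd q) * snd (cramer q (0,1)) * (aa q / JJ q)"
    using partials_transform(2)[OF G2 openOm p0, of "partial2 U"] P2 cr[OF p0] Pq by simp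
  have J0: "JJ q \<noteq> 0" using JJ_pos[OF q] by simp
  have "partial1 (partial1 U) p0 + partial2 (partial2 U) p0
     = f1 (snd q) * (DB q (cramer q (1,0)) + DA q (cramer q (0,1))) + f2 (snd q) * ((aa q ^ 2 + bb q ^ 2) / JJ q ^ 2)"
    unfolding Q1 Q2 using J0 by (simp add: cramer_def field_simps power2_eq_square)
  also have "\<dots> = (LL q ^ 2 / JJ q ^ 2) * (f2 (snd q) - f1 (snd q) * KK q)"
    unfolding key[OF q] LL_sq[OF q, symmetric] using J0 by (simp add: field_simps)
  finally show "partial1 (partial1 U) (Phi q) + partial2 (partial2 U) (Phi q)
       = (LL q ^ 2 / JJ q ^ 2) * (f2 (snd q) - f1 (snd q) * KK q)" unfolding p0_def .
qed

end

context lvl begin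

lemma in_D: "t \<in> {-eps<..<eps} \<Longrightarrow> (s, t) \<in> D"
  using D_eq by simp

lemma rev_dir:
  assumes H: "harmonic_on Om U" and CF: "critical_point_free_on Om U"
    and LS: "{{p \<in> Om. U p = c} | c. c \<in> U ` Om} = {(\<lambda>\<sigma>. Phi (\<sigma>, t)) ` UNIV | t. t \<in> {-eps<..<eps}}"
    and t: "t \<in> {-eps<..<eps}"
  shows "KK (s1, t) = KK (s2, t)"
proof -
  obtain U1 where dU: "\<And>p. p \<in> Om \<Longrightarrow> (U has_derivative blinfun_apply (U1 p)) (at p)" and C1: "C1_on Om U1"
    using H unfolding harmonic_on_def C2_on_def by blast
  obtain U2 where dU1: "\<And>p. p \<in> Om \<Longrightarrow> (U1 has_derivative blinfun_apply (U2 p)) (at p)"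
    using C1 unfolding C1_on_def by blast
  have const: "U (Phi (s, t')) = U (Phi (0, t'))" if t': "t' \<in> {-eps<..<eps}" for s t'
  proof -
    have "(\<lambda>\<sigma>. Phi (\<sigma>, t')) ` UNIV \<in> {{p \<in> Om. U p = c} | c. c \<in> U ` Om}"
      unfolding LS using t' by blast
    then obtain c where c: "(\<lambda>\<sigma>. Phi (\<sigma>, t')) ` UNIV = {p \<in> Om. U p = c}" by blast
    have "Phi (s, t') \<in> {p \<in> Om. U p = c}" "Phi (0, t') \<in> {p \<in> Om. U p = c}"
      unfolding c[symmetric] by auto
    then show ?thesis by simp
  qed
  define f where "f t' = U (Phi (0, t'))" for t'
  define f1 where "f1 t' = blinfun_apply (U1 (Phi (0, t'))) (blinfun_apply (Phi1 (0, t')) (0, 1))" for t'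
  have Uf: "U p = f (snd (Psi p))" if p: "p \<in> Om" for p
  proof -
    have "U p = U (Phi (fst (Psi p), snd (Psi p)))" using Phi_Psi[OF p] by simp
    also have "\<dots> = f (snd (Psi p))" unfolding f_def by (rule const[OF tau_in[OF p]])
    finally show ?thesis .
  qed
  have e: "((\<lambda>x::real. (0::real, x)) has_derivative (\<lambda>h. (0, h))) (at t')" for t'
    by (auto intro!: derivative_eq_intros)
  have df: "(f has_real_derivative f1 t') (at t')" if t': "t' \<in> {-eps<..<eps}" for t'
  proof -
    have q: "(0, t') \<in> D" using in_D[OF t'] .
    have "(f has_derivative (\<lambda>h. U1 (Phi (0, t')) (Phi1 (0, t') (0, h)))) (at t')"
      unfolding f_def[abs_def]
      using has_derivative_compose[OF has_derivative_compose[OF e dPhi[OF q]] dU[OF Phi_in[OF q]]] .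
    moreover have "(\<lambda>h. U1 (Phi (0, t')) (Phi1 (0, t') (0, h))) = (\<lambda>h. f1 t' * h)"
    proof
      fix h :: real
      have "(0::real, h) = h *\<^sub>R (0, 1)" by simp
      then show "U1 (Phi (0, t')) (Phi1 (0, t') (0, h)) = f1 t' * h"
        by (metis blinfun.scaleR_right f1_def mult.commute real_scaleR_def)
    qed
    ultimately show ?thesis by (simp add: has_field_derivative_def)
  qed
  have df1: "f1 differentiable (at t')" if t': "t' \<in> {-eps<..<eps}" for t'
  proof -
    have q: "(0, t') \<in> D" using in_D[OF t'] .
    have A: "((\<lambda>x. U1 (Phi (0, x))) has_derivative (\<lambda>h. U2 (Phi (0, t')) (Phi1 (0, t') (0, h)))) (at t')"
      using has_derivative_compose[OF has_derivative_compose[OF e dPhi[OF q]] dU1[OF Phi_in[OF q]]] .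
    have B: "((\<lambda>x. Phi1 (0, x) (0, 1)) has_derivative (\<lambda>h. Phi2 (0, t') (0, h) (0, 1))) (at t')"
      using has_derivative_compose[OF e dPhi1_col2[OF q]] .
    show ?thesis unfolding f1_def[abs_def]
      by (rule differentiableI, rule blinfun.FDERIV[OF A B])
  qed
  define f2 where "f2 t' = deriv f1 t'" for t'
  have df1': "(f1 has_real_derivative f2 t') (at t')" if t': "t' \<in> {-eps<..<eps}" for t'
    unfolding f2_def using df1[OF t'] DERIV_deriv_iff_real_differentiable by blast
  have main: "KK (s, t) = f2 t / f1 t" for s
  proof -
    have q: "(s, t) \<in> D" using in_D[OF t] .
    note L = lap[OF df df1' Uf q]
    have J0: "JJ (s, t) > 0" using JJ_pos[OF q] .
    have ab: "aa (s, t) ^ 2 + bb (s, t) ^ 2 > 0" using ab_nz[OF q] .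
    have "f1 t \<noteq> 0"
    proof
      assume "f1 t = 0"
      then have "(partial1 U (Phi (s, t)), partial2 U (Phi (s, t))) = (0, 0)"
        using L(1,2) by simp
      then show False using CF Phi_in[OF q] unfolding critical_point_free_on_def by blast
    qed
    moreover have "partial1 (partial1 U) (Phi (s, t)) + partial2 (partial2 U) (Phi (s, t)) = 0"
      using H Phi_in[OF q] unfolding harmonic_on_def by blast
    ultimately have "f2 t - f1 t * KK (s, t) = 0"
      using L(3) J0 LL_pos[OF q] by simp
    with \<open>f1 t \<noteq> 0\<close> show ?thesis by (simp add: field_simps)
  qed
  show ?thesis using main[of s1] main[of s2] by simp
qed

end

lemma antideriv:
  fixes g :: "real \<Rightarrow> real"
  assumes "continuous_on {a<..<b} g" "a < b"
  shows "\<exists>F. \<forall>x\<in>{a<..<b}. (F has_real_derivative g x) (at x)"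
proof -
  have "\<And>x. ereal a < ereal x \<Longrightarrow> ereal x < ereal b \<Longrightarrow> isCont g x"
  proof -
    fix x assume "ereal a < ereal x" "ereal x < ereal b"
    then have "x \<in> {a<..<b}" by simp
    then show "isCont g x"
      using assms(1) continuous_on_eq_continuous_at[OF open_greaterThanLessThan] by blast
  qed
  then obtain F where "\<forall>x::real. ereal a < ereal x \<longrightarrow> ereal x < ereal b \<longrightarrow> (F has_vector_derivative g x) (at x)"
    using einterval_antiderivative[of "ereal a" "ereal b" g] assms(2) by auto
  then have "\<forall>x\<in>{a<..<b}. (F has_real_derivative g x) (at x)"
    by (auto simp: has_real_derivative_iff_has_vector_derivative)
  then show ?thesis by blast
qed

context lvl begin

lemma contPhi1: "continuous_on D Phi1"
  by (rule continuous_at_imp_continuous_on) (use dPhi1 has_derivative_continuous in blast)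

lemma contPsi: "continuous_on Om Psi"
  by (rule continuous_at_imp_continuous_on) (use dPsi has_derivative_continuous in blast)

lemma contPsi1: "continuous_on Om Psi1"
  by (rule continuous_at_imp_continuous_on) (use dPsi1 has_derivative_continuous in blast)

lemma cont_atoms: "continuous_on D aa" "continuous_on D bb" "continuous_on D cc" "continuous_on D dd"
  "continuous_on D da1" "continuous_on D da2" "continuous_on D db1" "continuous_on D db2"
  "continuous_on D dc1" "continuous_on D dc2" "continuous_on D dd1" "continuous_on D dd2"
  unfolding aa_def[abs_def] bb_def[abs_def] cc_def[abs_def] dd_def[abs_def]
    da1_def[abs_def] da2_def[abs_def] db1_def[abs_def] db2_def[abs_def]
    dc1_def[abs_def] dc2_def[abs_def] dd1_def[abs_def] dd2_def[abs_def]
  by (intro continuous_intros contPhi1 contPhi2)+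

lemma cont_JJ: "continuous_on D JJ" and cont_LL: "continuous_on D LL"
  and cont_DJ: "continuous_on D DJ1" "continuous_on D DJ2"
  unfolding JJ_def[abs_def] LL_def[abs_def] DJ1_def[abs_def] DJ2_def[abs_def]
  by (intro continuous_intros cont_atoms)+

lemma JJ_nz: assumes "q \<in> D" shows "JJ q \<noteq> 0" using JJ_pos[OF assms] by simp
lemma LL_nz: assumes "q \<in> D" shows "LL q \<noteq> 0" using LL_pos[OF assms] by simp

lemma cont_KK: "continuous_on D KK"
  unfolding KK_def[abs_def] DPH_def DLh_def cramer_def fst_conv snd_conv
  by (intro continuous_intros cont_atoms cont_JJ cont_LL cont_DJ; auto simp: JJ_nz LL_nz)

end

context lvl begin

lemma fwd_dir:
  assumes K: "\<And>t s1 s2. t \<in> {-eps<..<eps} \<Longrightarrow> KK (s1, t) = KK (s2, t)"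
  shows "\<exists>U. harmonic_on Om U \<and> critical_point_free_on Om U \<and>
            {{p \<in> Om. U p = c} | c. c \<in> U ` Om} = {(\<lambda>\<sigma>. Phi (\<sigma>, t)) ` UNIV | t. t \<in> {-eps<..<eps}}"
proof -
  let ?I = "{-eps<..<eps}"
  have epsl: "-eps < eps" using eps by simp
  define g where "g t = KK (0, t)" for t
  have cg: "continuous_on ?I g" unfolding g_def
    by (rule continuous_on_compose2[OF cont_KK]) (auto intro!: continuous_intros simp: D_eq)
  obtain G where G: "\<And>t. t \<in> ?I \<Longrightarrow> (G has_real_derivative g t) (at t)"
    using antideriv[OF cg epsl] by blast
  define f1 where "f1 t = exp (G t)" for t
  define f2 where "f2 t = f1 t * g t" for t
  have df1: "(f1 has_real_derivative f2 t) (at t)" if "t \<in> ?I" for t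
    unfolding f1_def[abs_def] f2_def f1_def using G[OF that] by (auto intro!: derivative_eq_intros)
  have cf1: "continuous_on ?I f1"
    by (rule continuous_at_imp_continuous_on) (use df1 DERIV_isCont in blast)
  obtain f where df: "\<And>t. t \<in> ?I \<Longrightarrow> (f has_real_derivative f1 t) (at t)"
    using antideriv[OF cf1 epsl] by blast
  have cf2: "continuous_on ?I f2" unfolding f2_def[abs_def] by (intro continuous_intros cf1 cg)
  have f1pos: "f1 t > 0" for t unfolding f1_def by simp
  define U where "U p = f (snd (Psi p))" for p
  have Ueq: "\<And>p. p \<in> Om \<Longrightarrow> U p = f (snd (Psi p))" by (simp add: U_def)
  have df': "(f has_real_derivative f1 t) (at t)" if "t \<in> ?I" for t using df that by blast
  have df1': "(f1 has_real_derivative f2 t) (at t)" if "t \<in> ?I" for t using df1 that by blast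
  have Ueq': "U p = f (snd (Psi p))" if "p \<in> Om" for p by (simp add: U_def)
  have L1: "partial1 U (Phi q) = f1 (snd q) * (- bb q / JJ q)" if q: "q \<in> D" for q
    using df df1 Ueq q by (rule lap(1))
  have L2: "partial2 U (Phi q) = f1 (snd q) * (aa q / JJ q)" if q: "q \<in> D" for q
    using df df1 Ueq q by (rule lap(2))
  have L3: "partial1 (partial1 U) (Phi q) + partial2 (partial2 U) (Phi q)
       = (LL q ^ 2 / JJ q ^ 2) * (f2 (snd q) - f1 (snd q) * KK q)" if q: "q \<in> D" for q
    using df df1 Ueq q by (rule lap(3))
  have lap0: "partial1 (partial1 U) p + partial2 (partial2 U) p = 0" if p: "p \<in> Om" for p
  proof -
    have q: "Psi p \<in> D" by (rule Psi_in[OF p])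
    have "KK (Psi p) = g (snd (Psi p))" unfolding g_def
      using K[OF snd_in[OF q], of "fst (Psi p)" 0] by simp
    then show ?thesis using L3[OF q] Phi_Psi[OF p] by (simp add: f2_def)
  qed
  have cpf: "critical_point_free_on Om U"
    unfolding critical_point_free_on_def
  proof
    fix p assume p: "p \<in> Om"
    have q: "Psi p \<in> D" by (rule Psi_in[OF p])
    have "aa (Psi p) \<noteq> 0 \<or> bb (Psi p) \<noteq> 0" using ab_nz[OF q] by auto
    then show "(partial1 U p, partial2 U p) \<noteq> (0,0)"
      using L1[OF q] L2[OF q] Phi_Psi[OF p] f1pos[of "snd (Psi p)"] JJ_pos[OF q] by auto
  qed
  define c where "c p = f1 (snd (Psi p))" for p
  define B where "B p = snd_blinfun o\<^sub>L Psi1 p" for p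
  define U1 where "U1 p = c p *\<^sub>R B p" for p
  define U2' where "U2' p = (\<lambda>h. c p *\<^sub>R (snd_blinfun o\<^sub>L Psi2 p h) + (f2 (snd (Psi p)) * snd (Psi1 p h)) *\<^sub>R B p)" for p
  define U2 where "U2 p = Blinfun (U2' p)" for p
  have dU: "(U has_derivative blinfun_apply (U1 p)) (at p)" if p: "p \<in> Om" for p
  proof -
    have "(U has_derivative (\<lambda>h. f1 (snd (Psi p)) * snd (Psi1 p h))) (at p)"
      unfolding U_def[abs_def]
      using has_derivative_compose[OF has_derivative_snd[OF dPsi[OF p]] df[OF tau_in[OF p], unfolded has_field_derivative_def]] .
    then show ?thesis by (rule hd_eq) (simp add: U1_def c_def B_def scaleR_blinfun.rep_eq)
  qed
  have dc: "(c has_derivative (\<lambda>h. f2 (snd (Psi p)) * snd (Psi1 p h))) (at p)" if p: "p \<in> Om" for p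
    unfolding c_def[abs_def]
    using has_derivative_compose[OF has_derivative_snd[OF dPsi[OF p]] df1[OF tau_in[OF p], unfolded has_field_derivative_def]] .
  have dB: "(B has_derivative (\<lambda>h. snd_blinfun o\<^sub>L Psi2 p h)) (at p)" if p: "p \<in> Om" for p
    unfolding B_def[abs_def]
    by (rule bounded_linear.has_derivative[OF bounded_bilinear.bounded_linear_right[OF bounded_bilinear_blinfun_compose] dPsi1[OF p]])
  have dU1: "(U1 has_derivative U2' p) (at p)" if p: "p \<in> Om" for p
    unfolding U1_def[abs_def] U2'_def using has_derivative_scaleR[OF dc[OF p] dB[OF p]] by simp
  have U2a: "blinfun_apply (U2 p) = U2' p" if p: "p \<in> Om" for p
    unfolding U2_def by (rule bounded_linear_Blinfun_apply[OF has_derivative_bounded_linear[OF dU1[OF p]]])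
  have ctau: "continuous_on Om (\<lambda>p. snd (Psi p))" by (intro continuous_intros contPsi)
  have tau_img: "(\<lambda>p. snd (Psi p)) ` Om \<subseteq> ?I" using tau_in by auto
  have cU2: "continuous_on Om U2"
  proof (rule continuous_on_blinfun_componentwise)
    fix i :: "real \<times> real" assume "i \<in> Basis"
    have "continuous_on Om (\<lambda>p. f1 (snd (Psi p)) *\<^sub>R (snd_blinfun o\<^sub>L Psi2 p i) + (f2 (snd (Psi p)) * snd (Psi1 p i)) *\<^sub>R (snd_blinfun o\<^sub>L Psi1 p))"
      by (intro continuous_intros continuous_on_compose2[OF cf1 ctau tau_img]
          continuous_on_compose2[OF cf2 ctau tau_img] contPsi1 contPsi2 contPsi)
    then show "continuous_on Om (\<lambda>p. U2 p i)"
      by (rule continuous_on_eq) (simp add: U2a U2'_def c_def B_def)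
  qed
  have C2U: "C2_on Om U"
    unfolding C2_on_def C1_on_def
    by (intro exI[of _ U1] conjI ballI exI[of _ U2]) (auto simp: dU dU1 U2a cU2)
  have harm: "harmonic_on Om U" unfolding harmonic_on_def using C2U lap0 by blast
  have fmono: "f t1 < f t2" if t12: "t1 \<in> ?I" "t2 \<in> ?I" "t1 < t2" for t1 t2
  proof (rule DERIV_pos_imp_increasing[OF t12(3)])
    fix x assume "t1 \<le> x" "x \<le> t2"
    then have "x \<in> ?I" using t12 by auto
    then show "\<exists>y. DERIV f x :> y \<and> y > 0" using df f1pos by blast
  qed
  have finj: "t1 = t2" if "t1 \<in> ?I" "t2 \<in> ?I" "f t1 = f t2" for t1 t2
    using fmono[of t1 t2] fmono[of t2 t1] that by (metis less_irrefl linorder_neqE)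
  have lvl: "{p \<in> Om. U p = f t0} = (\<lambda>\<sigma>. Phi (\<sigma>, t0)) ` UNIV" if t0: "t0 \<in> ?I" for t0
  proof
    show "{p \<in> Om. U p = f t0} \<subseteq> (\<lambda>\<sigma>. Phi (\<sigma>, t0)) ` UNIV"
    proof
      fix p assume "p \<in> {p \<in> Om. U p = f t0}"
      then have p: "p \<in> Om" and "f (snd (Psi p)) = f t0" by (auto simp: U_def)
      then have "snd (Psi p) = t0" using finj tau_in[OF p] t0 by blast
      then have "p = Phi (fst (Psi p), t0)" using Phi_Psi[OF p] by (metis prod.collapse)
      then show "p \<in> (\<lambda>\<sigma>. Phi (\<sigma>, t0)) ` UNIV" by blast
    qed
    show "(\<lambda>\<sigma>. Phi (\<sigma>, t0)) ` UNIV \<subseteq> {p \<in> Om. U p = f t0}"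
      using Phi_in[OF in_D[OF t0]] Psi_Phi[OF in_D[OF t0]] by (auto simp: U_def)
  qed
  have LS: "{{p \<in> Om. U p = c} | c. c \<in> U ` Om} = {(\<lambda>\<sigma>. Phi (\<sigma>, t)) ` UNIV | t. t \<in> ?I}"
  proof (intro equalityI subsetI)
    fix S assume "S \<in> {{p \<in> Om. U p = c} | c. c \<in> U ` Om}"
    then obtain p where p: "p \<in> Om" and S: "S = {x \<in> Om. U x = U p}" by blast
    have "U p = f (snd (Psi p))" by (simp add: U_def)
    then have "S = (\<lambda>\<sigma>. Phi (\<sigma>, snd (Psi p))) ` UNIV" using S lvl[OF tau_in[OF p]] by simp
    then show "S \<in> {(\<lambda>\<sigma>. Phi (\<sigma>, t)) ` UNIV | t. t \<in> ?I}" using tau_in[OF p] by blast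
  next
    fix S assume "S \<in> {(\<lambda>\<sigma>. Phi (\<sigma>, t)) ` UNIV | t. t \<in> ?I}"
    then obtain t0 where t0: "t0 \<in> ?I" and S: "S = (\<lambda>\<sigma>. Phi (\<sigma>, t0)) ` UNIV" by blast
    have p0: "Phi (0, t0) \<in> Om" by (rule Phi_in[OF in_D[OF t0]])
    have "U (Phi (0, t0)) = f t0" using Psi_Phi[OF in_D[OF t0]] by (simp add: U_def)
    then have "S = {p \<in> Om. U p = U (Phi (0, t0))}" using S lvl[OF t0] by simp
    then show "S \<in> {{p \<in> Om. U p = c} | c. c \<in> U ` Om}" using p0 by blast
  qed
  show ?thesis using harm cpf LS by blast
qed

end

theorem theorem1:
  fixes \<Phi> :: "real \<times> real \<Rightarrow> real \<times> real" and \<epsilon> :: real and \<Omega> :: "(real \<times> real) set"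
  defines "D \<equiv> (UNIV :: real set) \<times> {-\<epsilon><..<\<epsilon>}"
  assumes eps: "\<epsilon> > 0"
    and C2: "C2_on D \<Phi>"
    and inj: "inj_on \<Phi> D"
    and onto: "\<Phi> ` D = \<Omega>"
    and C2_inv: "C2_on \<Omega> (inv_into D \<Phi>)"
    and orient: "\<forall>q\<in>D. jac \<Phi> q > 0"
  shows "(\<exists>U :: real \<times> real \<Rightarrow> real.
            harmonic_on \<Omega> U \<and> critical_point_free_on \<Omega> U \<and>
            {{p \<in> \<Omega>. U p = c} | c. c \<in> U ` \<Omega>} =
            {(\<lambda>\<sigma>. \<Phi> (\<sigma>, t)) ` UNIV | t. t \<in> {-\<epsilon><..<\<epsilon>}})
         \<longleftrightarrow>
         (\<forall>t \<in> {-\<epsilon><..<\<epsilon>}. \<forall>\<sigma>1 \<sigma>2.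
            dphi_ds D \<Phi> (\<sigma>1, t) + kappa \<Phi> (\<sigma>1, t) * phi \<Phi> (\<sigma>1, t) =
            dphi_ds D \<Phi> (\<sigma>2, t) + kappa \<Phi> (\<sigma>2, t) * phi \<Phi> (\<sigma>2, t))"
proof -
  obtain Phi1 where dPhi: "\<And>q. q \<in> D \<Longrightarrow> (\<Phi> has_derivative blinfun_apply (Phi1 q)) (at q)"
    and C1: "C1_on D Phi1"
    using C2 unfolding C2_on_def by blast
  obtain Phi2 where dPhi1: "\<And>q. q \<in> D \<Longrightarrow> (Phi1 has_derivative blinfun_apply (Phi2 q)) (at q)"
    and cPhi2: "continuous_on D Phi2"
    using C1 unfolding C1_on_def by blast
  obtain Psi1 where dPsi: "\<And>p. p \<in> \<Omega> \<Longrightarrow> (inv_into D \<Phi> has_derivative blinfun_apply (Psi1 p)) (at p)"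
    and C1': "C1_on \<Omega> Psi1"
    using C2_inv unfolding C2_on_def by blast
  obtain Psi2 where dPsi1: "\<And>p. p \<in> \<Omega> \<Longrightarrow> (Psi1 has_derivative blinfun_apply (Psi2 p)) (at p)"
    and cPsi2: "continuous_on \<Omega> Psi2"
    using C1' unfolding C1_on_def by blast
  interpret L: lvl \<Phi> \<epsilon> \<Omega> D Phi1 Phi2 Psi1 Psi2
    by (unfold_locales) (use D_def eps dPhi dPhi1 cPhi2 inj onto dPsi dPsi1 cPsi2 orient in auto)
  have KE: "dphi_ds D \<Phi> (s, t) + kappa \<Phi> (s, t) * phi \<Phi> (s, t) = L.KK (s, t)"
    if "t \<in> {-\<epsilon><..<\<epsilon>}" for s t
    using L.K_eq[OF L.in_D[OF that]] .
  show ?thesis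
  proof
    assume "\<exists>U :: real \<times> real \<Rightarrow> real.
            harmonic_on \<Omega> U \<and> critical_point_free_on \<Omega> U \<and>
            {{p \<in> \<Omega>. U p = c} | c. c \<in> U ` \<Omega>} =
            {(\<lambda>\<sigma>. \<Phi> (\<sigma>, t)) ` UNIV | t. t \<in> {-\<epsilon><..<\<epsilon>}}"
    then obtain U where H: "harmonic_on \<Omega> U" and CF: "critical_point_free_on \<Omega> U"
      and LS: "{{p \<in> \<Omega>. U p = c} | c. c \<in> U ` \<Omega>} =
            {(\<lambda>\<sigma>. \<Phi> (\<sigma>, t)) ` UNIV | t. t \<in> {-\<epsilon><..<\<epsilon>}}" by blast
    show "\<forall>t \<in> {-\<epsilon><..<\<epsilon>}. \<forall>\<sigma>1 \<sigma>2.
            dphi_ds D \<Phi> (\<sigma>1, t) + kappa \<Phi> (\<sigma>1, t) * phi \<Phi> (\<sigma>1, t) =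
            dphi_ds D \<Phi> (\<sigma>2, t) + kappa \<Phi> (\<sigma>2, t) * phi \<Phi> (\<sigma>2, t)"
      using L.rev_dir[OF H CF LS] KE by simp
  next
    assume A: "\<forall>t \<in> {-\<epsilon><..<\<epsilon>}. \<forall>\<sigma>1 \<sigma>2.
            dphi_ds D \<Phi> (\<sigma>1, t) + kappa \<Phi> (\<sigma>1, t) * phi \<Phi> (\<sigma>1, t) =
            dphi_ds D \<Phi> (\<sigma>2, t) + kappa \<Phi> (\<sigma>2, t) * phi \<Phi> (\<sigma>2, t)"
    have "L.KK (s1, t) = L.KK (s2, t)" if "t \<in> {-\<epsilon><..<\<epsilon>}" for t s1 s2
      using A that KE[OF that, of s1] KE[OF that, of s2] by metis
    then show "\<exists>U :: real \<times> real \<Rightarrow> real.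
            harmonic_on \<Omega> U \<and> critical_point_free_on \<Omega> U \<and>
            {{p \<in> \<Omega>. U p = c} | c. c \<in> U ` \<Omega>} =
            {(\<lambda>\<sigma>. \<Phi> (\<sigma>, t)) ` UNIV | t. t \<in> {-\<epsilon><..<\<epsilon>}}"
      by (rule L.fwd_dir)
  qed
qed

end
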